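(* For every $n\ge 2$, $f_{0,n}=(2n-4)!!$ and, for every $k=1,\dots,n-2$, $$f_{k,n}=\frac{(2n-k-5)!\,k}{(2n-2k-4)!!}\cdot{}_3F_2\!\left(\begin{array}{l}1,\ 2-n,\ k+2-n\\ \frac{k+5}{2}-n,\ \frac{k}{2}-n+3\end{array};1\right).$$
   Context: $\mathcal{T}_n$ is the set of fully resolved (binary) rooted trees with leaves bijectively labeled by $\{1,\dots,n\}$. For leaves $i\ne j$, $\varphi_T(i,j)$ is the depth (number of arcs from the root) of their lowest common ancestor. For $k\ge 0$, $f_{k,n}=|\{T\in\mathcal{T}_n:\varphi_T(1,2)=k\}|$. Double factorial: $(2m)!!=(2m)(2m-2)\cdots2$, $0!!=1$. The generalized hypergeometric function is ${}_pF_q\left(\begin{smallmatrix}a_1,\dots,a_p\\ b_1,\dots,b_q\end{smallmatrix};z\right)=\sum_{m\ge0}\frac{(a_1)_m\cdots(a_p)_m}{(b_1)_m\cdots(b_q)_m}\frac{z^m}{m!}$ with $(a)_0=1$, $(a)_m=a(a+1)\cdots(a+m-1)$; in the formula above the series terminates, being understood as the finite sum over $m=0,\dots,n-k-2$ (beyond which the factor $(k+2-n)_m$ vanishes; for these $m$ the denominators are nonzero). *)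

theory Defs
  imports Complex_Main
begin

text \<open>An unordered (fully resolved) tree is
  represented by its canonical ordered form: at every internal node the child containing
  the smallest leaf label is written on the left.\<close>

datatype ltree = Leaf nat | Node ltree ltree

fun leaves :: "ltree \<Rightarrow> nat list" where
  "leaves (Leaf a) = [a]"
| "leaves (Node l r) = leaves l @ leaves r"

fun canonical :: "ltree \<Rightarrow> bool" where
  "canonical (Leaf a) = True"
| "canonical (Node l r) =
     (canonical l \<and> canonical r \<and> Min (set (leaves l)) < Min (set (leaves r)))"

definition trees :: "nat \<Rightarrow> ltree set" where
  "trees n = {t. canonical t \<and> distinct (leaves t) \<and> set (leaves t) = {1..n}}"

text \<open>Depth (number of arcs from the root) of the lowest common ancestor of leaves i and j.\<close>
fun phi :: "ltree \<Rightarrow> nat \<Rightarrow> nat \<Rightarrow> nat" where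
  "phi (Leaf a) i j = 0"
| "phi (Node l r) i j =
     (if i \<in> set (leaves l) \<and> j \<in> set (leaves l) then Suc (phi l i j)
      else if i \<in> set (leaves r) \<and> j \<in> set (leaves r) then Suc (phi r i j)
      else 0)"

definition f :: "nat \<Rightarrow> nat \<Rightarrow> nat" where
  "f k n = card {t \<in> trees n. phi t 1 2 = k}"

fun dfact :: "nat \<Rightarrow> nat" where
  "dfact 0 = 1"
| "dfact (Suc 0) = 1"
| "dfact (Suc (Suc m)) = (m + 2) * dfact m"

definition hyp3F2 :: "real \<Rightarrow> real \<Rightarrow> real \<Rightarrow> real \<Rightarrow> real \<Rightarrow> real \<Rightarrow> nat \<Rightarrow> real" where
  "hyp3F2 a1 a2 a3 b1 b2 z N =
     (\<Sum>m\<le>N. pochhammer a1 m * pochhammer a2 m * pochhammer a3 m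
              / (pochhammer b1 m * pochhammer b2 m) * z ^ m / fact m)"

end

theory Submission
  imports Defs
begin


fun sz :: "ltree \<Rightarrow> nat" where
  "sz (Leaf a) = 1"
| "sz (Node l r) = Suc (sz l + sz r)"

fun ins :: "nat \<Rightarrow> ltree \<Rightarrow> nat \<Rightarrow> ltree" where
  "ins x t 0 = Node t (Leaf x)"
| "ins x (Leaf a) (Suc p) = Node (Leaf a) (Leaf x)"
| "ins x (Node l r) (Suc p) = (if p < sz l then Node (ins x l p) r else Node l (ins x r (p - sz l)))"

fun del :: "nat \<Rightarrow> ltree \<Rightarrow> ltree" where
  "del x (Leaf a) = Leaf a"
| "del x (Node l r) = (if r = Leaf x then l else if l = Leaf x then r
     else if x \<in> set (leaves l) then Node (del x l) r else Node l (del x r))"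

fun pos :: "nat \<Rightarrow> ltree \<Rightarrow> nat" where
  "pos x (Leaf a) = 0"
| "pos x (Node l r) = (if r = Leaf x then 0
     else if x \<in> set (leaves l) then Suc (pos x l) else Suc (sz l + pos x r))"

lemma leaves_ne: "leaves t \<noteq> []"
  by (induction t) auto

lemma sz_pos: "sz t \<ge> 1"
  by (cases t) auto

lemma sz_len: "sz t = 2 * length (leaves t) - 1"
proof (induction t)
  case (Node l r)
  have "length (leaves l) \<ge> 1" "length (leaves r) \<ge> 1" using leaves_ne
    by (metis One_nat_def Suc_leI length_greater_0_conv)+
  then show ?case using Node by simp
qed simp

lemma ins_not_leaf: "ins x t p \<noteq> Leaf y"
  by (induction x t p rule: ins.induct) auto

lemma set_ins: "set (leaves (ins x t p)) = insert x (set (leaves t))"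
  by (induction x t p rule: ins.induct) auto

lemma distinct_ins: "distinct (leaves t) \<Longrightarrow> x \<notin> set (leaves t) \<Longrightarrow> distinct (leaves (ins x t p))"
  by (induction x t p rule: ins.induct) (auto simp: set_ins)

lemma Min_insert_big: "finite A \<Longrightarrow> A \<noteq> {} \<Longrightarrow> \<forall>y\<in>A. y < (x::nat) \<Longrightarrow> Min (insert x A) = Min A"
  by (simp add: min_def) (meson Min_in less_le_not_le)

lemma canonical_ins: "canonical t \<Longrightarrow> \<forall>y\<in>set (leaves t). y < x \<Longrightarrow> canonical (ins x t p)"
proof (induction x t p rule: ins.induct)
  case (1 x t)
  then show ?case using leaves_ne by (simp add: Min_less_iff)
next
  case (2 x a p)
  then show ?case by simp
next
  case (3 x l r p)
  show ?case
  proof (cases "p < sz l")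
    case True
    then show ?thesis using 3 leaves_ne
      by (auto simp: set_ins Min_insert_big)
  next
    case False
    then show ?thesis using 3 leaves_ne
      by (auto simp: set_ins Min_insert_big)
  qed
qed

lemma del_ins: "x \<notin> set (leaves t) \<Longrightarrow> p < sz t \<Longrightarrow> del x (ins x t p) = t \<and> pos x (ins x t p) = p"
proof (induction x t p rule: ins.induct)
  case (1 x t)
  then show ?case by (cases t) auto
next
  case (2 x a p)
  then show ?case by simp
next
  case (3 x l r p)
  then show ?case using ins_not_leaf by (auto simp: set_ins)
qed

lemma other_leaf: "x \<in> set (leaves t) \<Longrightarrow> t \<noteq> Leaf x \<Longrightarrow> distinct (leaves t) \<Longrightarrow> \<exists>y\<in>set (leaves t). y \<noteq> x"
proof (cases t)
  case (Node l r)
  assume a: "x \<in> set (leaves t)" "distinct (leaves t)"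
  obtain u v where "u \<in> set (leaves l)" "v \<in> set (leaves r)" using leaves_ne
    by (metis list.set_intros(1) neq_Nil_conv)
  moreover have "u \<noteq> v" using a Node calculation by auto
  ultimately show ?thesis using Node by (metis Un_iff leaves.simps(2) set_append)
qed auto

lemma Min_remove_big: "finite A \<Longrightarrow> \<exists>y\<in>A. y \<noteq> x \<Longrightarrow> \<forall>y\<in>A. y \<le> (x::nat) \<Longrightarrow> Min (A - {x}) = Min A"
proof -
  assume f: "finite A" and e: "\<exists>y\<in>A. y \<noteq> x" and b: "\<forall>y\<in>A. y \<le> x"
  show ?thesis
  proof (cases "x \<in> A")
    case True
    then have "A = insert x (A - {x})" by auto
    moreover have "A - {x} \<noteq> {}" using e by auto
    moreover have "\<forall>y\<in>A - {x}. y < x" using b by auto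
    ultimately show ?thesis using Min_insert_big[of "A - {x}" x] f by (metis finite_Diff)
  qed simp
qed

lemma ins_del: "x \<in> set (leaves t) \<Longrightarrow> distinct (leaves t) \<Longrightarrow> canonical t \<Longrightarrow> t \<noteq> Leaf x
  \<Longrightarrow> \<forall>y\<in>set (leaves t). y \<le> x \<Longrightarrow>
  ins x (del x t) (pos x t) = t \<and> pos x t < sz (del x t) \<and>
  set (leaves (del x t)) = set (leaves t) - {x} \<and> canonical (del x t) \<and> distinct (leaves (del x t))"
proof (induction t)
  case (Leaf a)
  then show ?case by simp
next
  case (Node l r)
  show ?case
  proof (cases "r = Leaf x")
    case True
    then show ?thesis using Node.prems sz_pos[of l] by auto
  next
    case rx: False
    show ?thesis
    proof (cases "l = Leaf x")
      case True
      obtain v where v: "v \<in> set (leaves r)" using leaves_ne by (metis list.set_intros(1) neq_Nil_conv)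
      have "Min (set (leaves r)) \<le> v" using v by simp
      also have "v \<le> x" using v Node.prems by auto
      finally show ?thesis using Node.prems True by auto
    next
      case lx: False
      show ?thesis
      proof (cases "x \<in> set (leaves l)")
        case True
        have IH: "ins x (del x l) (pos x l) = l \<and> pos x l < sz (del x l) \<and>
          set (leaves (del x l)) = set (leaves l) - {x} \<and> canonical (del x l) \<and> distinct (leaves (del x l))"
          using Node.IH(1) True lx Node.prems by auto
        have "\<exists>y\<in>set (leaves l). y \<noteq> x" using other_leaf[OF True lx] Node.prems by auto
        then have "Min (set (leaves l) - {x}) = Min (set (leaves l))"
          using Min_remove_big Node.prems by auto
        then show ?thesis using IH rx lx True Node.prems by auto
      next
        case False
        then have xr: "x \<in> set (leaves r)" using Node.prems by auto
        have IH: "ins x (del x r) (pos x r) = r \<and> pos x r < sz (del x r) \<and>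
          set (leaves (del x r)) = set (leaves r) - {x} \<and> canonical (del x r) \<and> distinct (leaves (del x r))"
          using Node.IH(2) xr rx Node.prems by auto
        have "\<exists>y\<in>set (leaves r). y \<noteq> x" using other_leaf[OF xr rx] Node.prems by auto
        then have "Min (set (leaves r) - {x}) = Min (set (leaves r))"
          using Min_remove_big Node.prems by auto
        then show ?thesis using IH rx lx False Node.prems by auto
      qed
    qed
  qed
qed


lemma trees_Suc: assumes "n \<ge> 1"
  shows "trees (Suc n) = (\<lambda>(t,p). ins (Suc n) t p) ` (SIGMA t:trees n. {..<sz t})"
proof
  show "(\<lambda>(t,p). ins (Suc n) t p) ` (SIGMA t:trees n. {..<sz t}) \<subseteq> trees (Suc n)"
  proof clarify
    fix t p assume t: "t \<in> trees n" and p: "p < sz t"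
    have s: "set (leaves t) = {1..n}" and d: "distinct (leaves t)" and c: "canonical t"
      using t by (auto simp: trees_def)
    show "ins (Suc n) t p \<in> trees (Suc n)"
    proof -
      have "\<forall>y\<in>set (leaves t). y < Suc n" using s by auto
      then have "canonical (ins (Suc n) t p)" using c canonical_ins by blast
      moreover have "distinct (leaves (ins (Suc n) t p))" using d s distinct_ins by auto
      moreover have "set (leaves (ins (Suc n) t p)) = {1..Suc n}" using s by (auto simp: set_ins)
      ultimately show ?thesis by (simp add: trees_def)
    qed
  qed
next
  show "trees (Suc n) \<subseteq> (\<lambda>(t,p). ins (Suc n) t p) ` (SIGMA t:trees n. {..<sz t})"
  proof
    fix t assume t: "t \<in> trees (Suc n)"
    have s: "set (leaves t) = {1..Suc n}" and d: "distinct (leaves t)" and c: "canonical t"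
      using t by (auto simp: trees_def)
    have "(1::nat) \<in> set (leaves t)" using s by simp
    then have nl: "t \<noteq> Leaf (Suc n)"
    proof (intro notI)
      assume h: "t = Leaf (Suc n)"
      have "(1::nat) \<in> set (leaves (Leaf (Suc n)))" using \<open>1 \<in> set (leaves t)\<close> h by simp
      then have "(1::nat) = Suc n" by simp
      with assms show False by simp
    qed
    have R: "ins (Suc n) (del (Suc n) t) (pos (Suc n) t) = t \<and> pos (Suc n) t < sz (del (Suc n) t) \<and>
      set (leaves (del (Suc n) t)) = set (leaves t) - {Suc n} \<and> canonical (del (Suc n) t) \<and> distinct (leaves (del (Suc n) t))"
      using s d c nl by (intro ins_del) auto
    have "set (leaves t) - {Suc n} = {1..n}" unfolding s by auto
    then have "del (Suc n) t \<in> trees n" using R by (auto simp: trees_def)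
    show "t \<in> (\<lambda>(t,p). ins (Suc n) t p) ` (SIGMA t:trees n. {..<sz t})"
    proof (rule image_eqI[where x="(del (Suc n) t, pos (Suc n) t)"])
      show "t = (\<lambda>(t,p). ins (Suc n) t p) (del (Suc n) t, pos (Suc n) t)" using R by simp
      show "(del (Suc n) t, pos (Suc n) t) \<in> (SIGMA t:trees n. {..<sz t})" using R \<open>del (Suc n) t \<in> trees n\<close> by simp
    qed
  qed
qed

lemma trees_inj: "inj_on (\<lambda>(t,p). ins (Suc n) t p) (SIGMA t:trees n. {..<sz t})"
proof (rule inj_onI, clarify)
  fix t p t' p' assume t: "t \<in> trees n" "p < sz t" and t': "t' \<in> trees n" "p' < sz t'"
    and e: "ins (Suc n) t p = ins (Suc n) t' p'"
  have "Suc n \<notin> set (leaves t)" "Suc n \<notin> set (leaves t')" using t t' by (auto simp: trees_def)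
  then show "t = t' \<and> p = p'" using del_ins e t t' by metis
qed

lemma trees_1: "trees 1 = {Leaf 1}"
proof -
  have "t = Leaf 1" if "t \<in> trees 1" for t
  proof (cases t)
    case (Leaf a)
    then show ?thesis using that by (auto simp: trees_def)
  next
    case (Node l r)
    have "distinct (leaves t)" "set (leaves t) = {1}" using that by (auto simp: trees_def)
    then have "length (leaves t) = 1" using distinct_card by fastforce
    moreover have "length (leaves l) \<ge> 1" "length (leaves r) \<ge> 1" using leaves_ne
      by (metis One_nat_def Suc_leI length_greater_0_conv)+
    ultimately show ?thesis using Node by simp
  qed
  moreover have "Leaf 1 \<in> trees 1" by (simp add: trees_def)
  ultimately show ?thesis by blast
qed

lemma finite_trees: "finite (trees n)"
proof (induction n)
  case 0
  have "trees 0 = {}" using leaves_ne by (auto simp: trees_def)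
  then show ?case by simp
next
  case (Suc n)
  show ?case
  proof (cases "n = 0")
    case True
    then show ?thesis using trees_1 by simp
  next
    case False
    have "finite (SIGMA t:trees n. {..<sz t})" using Suc.IH by blast
    then show ?thesis using trees_Suc[of n] False by simp
  qed
qed

lemma count_Suc: assumes "n \<ge> 1"
  shows "card {t \<in> trees (Suc n). P t} = (\<Sum>t\<in>trees n. card {p. p < sz t \<and> P (ins (Suc n) t p)})"
proof -
  let ?S = "SIGMA t:trees n. {..<sz t}"
  let ?g = "\<lambda>(t,p). ins (Suc n) t p"
  have "{t \<in> trees (Suc n). P t} = ?g ` {x \<in> ?S. P (?g x)}"
    using trees_Suc[OF assms] by auto
  then have "card {t \<in> trees (Suc n). P t} = card {x \<in> ?S. P (?g x)}"
    using card_image[OF inj_on_subset[OF trees_inj[of n]]] by auto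
  also have "{x \<in> ?S. P (?g x)} = (SIGMA t:trees n. {p. p < sz t \<and> P (ins (Suc n) t p)})"
    by auto
  also have "card \<dots> = (\<Sum>t\<in>trees n. card {p. p < sz t \<and> P (ins (Suc n) t p)})"
    by (rule card_SigmaI) (simp_all add: finite_trees)
  finally show ?thesis .
qed


fun A :: "ltree \<Rightarrow> nat set" where
  "A (Leaf a) = {0}"
| "A (Node l r) = insert 0 (if 1 \<in> set (leaves l) \<and> 2 \<in> set (leaves l) then Suc ` A l
     else if 1 \<in> set (leaves r) \<and> 2 \<in> set (leaves r) then (\<lambda>p. Suc (sz l + p)) ` A r else {})"

lemma A_sub: "A t \<subseteq> {..<sz t}"
  by (induction t) auto

lemma card_A: "card (A t) = Suc (phi t 1 2)"
proof (induction t)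
  case (Leaf a)
  then show ?case by simp
next
  case (Node l r)
  have f1: "finite (A l)" "finite (A r)" using A_sub finite_subset by blast+
  have i1: "inj_on Suc (A l)" by simp
  have i2: "inj_on (\<lambda>p. Suc (sz l + p)) (A r)" by (simp add: inj_on_def)
  have n1: "0 \<notin> Suc ` A l" "0 \<notin> (\<lambda>p. Suc (sz l + p)) ` A r" by auto
  have f2: "finite (Suc ` A l)" "finite ((\<lambda>p. Suc (sz l + p)) ` A r)" using f1 by auto
  show ?case using Node f1 card_image[OF i1] card_image[OF i2] card_insert_disjoint[OF f2(1) n1(1)]
     card_insert_disjoint[OF f2(2) n1(2)] by auto
qed

lemma phi_ins: "1 \<in> set (leaves t) \<Longrightarrow> 2 \<in> set (leaves t) \<Longrightarrow> x \<notin> set (leaves t) \<Longrightarrow> p < sz t \<Longrightarrow>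
  phi (ins x t p) 1 2 = phi t 1 2 + (if p \<in> A t then 1 else 0)"
proof (induction x t p rule: ins.induct)
  case (1 x t)
  then show ?case by (cases t) auto
next
  case (2 x a p)
  then show ?case by simp
next
  case (3 x l r p)
  have x1: "x \<noteq> 1" "x \<noteq> 2" using 3 by auto
  show ?case
  proof (cases "p < sz l")
    case True
    have nr: "Suc p \<noteq> Suc (sz l + q)" for q using True by simp
    show ?thesis
    proof (cases "1 \<in> set (leaves l) \<and> 2 \<in> set (leaves l)")
      case True2: True
      then show ?thesis using 3 True by (auto simp: set_ins)
    next
      case False
      then show ?thesis using 3 True x1 nr by (auto simp: set_ins)
    qed
  next
    case False
    show ?thesis
    proof (cases "1 \<in> set (leaves l) \<and> 2 \<in> set (leaves l)")
      case True2: True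
      then show ?thesis using 3 False A_sub[of l] by (auto simp: set_ins)
    next
      case F2: False
      show ?thesis
      proof (cases "1 \<in> set (leaves r) \<and> 2 \<in> set (leaves r)")
        case True
        have "p - sz l < sz r" using 3(6) False by simp
        then have IH: "phi (ins x r (p - sz l)) 1 2 = phi r 1 2 + (if p - sz l \<in> A r then 1 else 0)"
          using 3 False True by auto
        have "(Suc p \<in> (\<lambda>p. Suc (sz l + p)) ` A r) = (p - sz l \<in> A r)" using False by force
        then show ?thesis using IH F2 True False by (auto simp: set_ins x1)
      next
        case False3: False
        then show ?thesis using F2 False x1 by (auto simp: set_ins)
      qed
    qed
  qed
qed

lemma card_pos_phi: assumes "1 \<in> set (leaves t)" "2 \<in> set (leaves t)" "x \<notin> set (leaves t)"
  shows "card {p. p < sz t \<and> phi (ins x t p) 1 2 = k} =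
    (if phi t 1 2 = k then sz t - Suc k else 0) + (if Suc (phi t 1 2) = k then k else 0)"
proof -
  have e: "{p. p < sz t \<and> phi (ins x t p) 1 2 = k} = {p. p < sz t \<and> phi t 1 2 + (if p \<in> A t then 1 else 0) = k}"
    using phi_ins[OF assms] by auto
  have fA: "finite (A t)" using A_sub finite_subset by blast
  show ?thesis
  proof (cases "phi t 1 2 = k")
    case True
    then have "{p. p < sz t \<and> phi t 1 2 + (if p \<in> A t then 1 else 0) = k} = {..<sz t} - A t" by auto
    then show ?thesis using e True card_Diff_subset[OF fA A_sub] card_A by simp
  next
    case False
    show ?thesis
    proof (cases "Suc (phi t 1 2) = k")
      case True
      then have "{p. p < sz t \<and> phi t 1 2 + (if p \<in> A t then 1 else 0) = k} = A t" using A_sub by auto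
      then show ?thesis using e True card_A by simp
    next
      case F2: False
      then have "{p. p < sz t \<and> phi t 1 2 + (if p \<in> A t then 1 else 0) = k} = {}" using False by auto
      then show ?thesis using e False F2 by simp
    qed
  qed
qed

lemma sum_if_const: "finite T \<Longrightarrow> (\<Sum>t\<in>T. if P t then (c::nat) else 0) = c * card {t\<in>T. P t}"
  by (simp add: sum.If_cases Int_def)

lemma f_rec: assumes "n \<ge> 2"
  shows "f k (Suc n) = (2 * n - 2 - k) * f k n + (if k \<ge> 1 then k * f (k - 1) n else 0)"
proof -
  have "f k (Suc n) = (\<Sum>t\<in>trees n. card {p. p < sz t \<and> phi (ins (Suc n) t p) 1 2 = k})"
    unfolding f_def using count_Suc[of n] assms by simp
  also have "\<dots> = (\<Sum>t\<in>trees n. (if phi t 1 2 = k then 2 * n - 2 - k else 0) + (if Suc (phi t 1 2) = k then k else 0))"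
  proof (rule sum.cong[OF refl])
    fix t assume t: "t \<in> trees n"
    have s: "set (leaves t) = {1..n}" and d: "distinct (leaves t)" using t by (auto simp: trees_def)
    have "length (leaves t) = n" using distinct_card[OF d] s by simp
    then have "sz t = 2 * n - 1" using sz_len by simp
    moreover have "2 * n - 1 - Suc k = 2 * n - 2 - k" by simp
    moreover have "1 \<in> set (leaves t)" "2 \<in> set (leaves t)" "Suc n \<notin> set (leaves t)" using s assms by auto
    ultimately show "card {p. p < sz t \<and> phi (ins (Suc n) t p) 1 2 = k} = (if phi t 1 2 = k then 2 * n - 2 - k else 0) + (if Suc (phi t 1 2) = k then k else 0)"
      using card_pos_phi[of t "Suc n" k] by simp
  qed
  also have "\<dots> = (2 * n - 2 - k) * f k n + k * card {t \<in> trees n. Suc (phi t 1 2) = k}"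
    by (simp add: sum.distrib sum_if_const finite_trees f_def)
  also have "k * card {t \<in> trees n. Suc (phi t 1 2) = k} = (if k \<ge> 1 then k * f (k - 1) n else 0)"
    unfolding f_def by (cases k) auto
  finally show ?thesis .
qed

lemma f_2: "f k 2 = (if k = 0 then 1 else 0)"
proof -
  have "f k (Suc 1) = (\<Sum>t\<in>trees 1. card {p. p < sz t \<and> phi (ins (Suc 1) t p) 1 2 = k})"
    unfolding f_def using count_Suc[of 1] by simp
  also have "\<dots> = card {p. p < 1 \<and> phi (ins 2 (Leaf 1) p) 1 2 = k}"
    using trees_1 by (simp add: numeral_2_eq_2)
  also have "{p. p < 1 \<and> phi (ins 2 (Leaf 1) p) 1 2 = k} = (if k = 0 then {0} else {})" by auto
  also have "card \<dots> = (if k = 0 then 1 else 0)" by auto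
  finally show ?thesis by (simp add: numeral_2_eq_2)
qed



definition c :: "nat \<Rightarrow> nat \<Rightarrow> real" where
  "c k i = (if k = 0 then (if i = 0 then 1 else 0) else real k * fact (k + 2 * i - 1) / (fact (k + i) * fact i))"

definition Q :: "nat \<Rightarrow> nat \<Rightarrow> real" where
  "Q k j = (\<Sum>i\<le>j. c k i / 4 ^ i)"

definition G :: "nat \<Rightarrow> nat \<Rightarrow> real" where
  "G k n = (if k + 2 \<le> n then fact (n - 2) * 2 ^ (n - k - 2) * Q k (n - k - 2) else 0)"

lemma c_0: "c k 0 = 1"
proof (cases k)
  case (Suc k')
  then show ?thesis by (simp add: c_def)
qed (simp add: c_def)

lemma Q_0: "Q k 0 = 1" by (simp add: Q_def c_0)

lemma Q_zero: "Q 0 j = 1"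
proof -
  have "\<And>i. c 0 i / 4 ^ i = (if i = 0 then 1 else 0)" by (simp add: c_def)
  then have "Q 0 j = (\<Sum>i\<le>j. if i = 0 then 1 else 0)" by (simp add: Q_def)
  also have "\<dots> = 1" by (simp add: sum.delta)
  finally show ?thesis .
qed

lemma c_step: assumes "k \<ge> 1"
  shows "2 * real k * c (k - 1) (Suc m) - 4 * real k * c k m
       = 2 * (real k + real m + 1) * c k (Suc m) - 8 * (real k + real m) * c k m"
proof -
  define F where "F = (fact (k + 2 * m - 1) :: real)"
  define X where "X = F / (fact (k + m) * fact m)"
  have fpos: "(fact (k + m) :: real) > 0" "(fact m :: real) > 0" by auto
  have e1: "k + 2 * Suc m - 1 = Suc (Suc (k + 2 * m - 1))" using assms by simp
  have f1: "(fact (k + 2 * Suc m - 1) :: real) = (real k + 2 * real m + 1) * (real k + 2 * real m) * F"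
  proof -
    define x where "x = k + 2 * m - 1"
    have hx: "real (Suc x) = real k + 2 * real m" using assms by (simp add: x_def)
    have "(fact (Suc (Suc x)) :: real) = real (Suc (Suc x)) * (real (Suc x) * fact x)" by simp
    also have "\<dots> = (real k + 2 * real m + 1) * (real k + 2 * real m) * fact x"
      using hx by simp
    finally show ?thesis unfolding e1 F_def x_def .
  qed
  have ck: "c k m = real k * X" using assms by (simp add: c_def X_def F_def)
  have ck1: "c k (Suc m) = real k * X * (real k + 2 * real m) * (real k + 2 * real m + 1) / ((real k + real m + 1) * (real m + 1))" (is "_ = ?rhs")
  proof -
    have "c k (Suc m) = real k * fact (k + 2 * Suc m - 1) / (fact (Suc (k + m)) * fact (Suc m))"
      using assms by (simp add: c_def)
    also have "\<dots> = real k * ((real k + 2 * real m + 1) * (real k + 2 * real m) * F) / ((real k + real m + 1) * fact (k + m) * ((real m + 1) * fact m))"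
      unfolding f1 by (simp add: algebra_simps)
    also have "\<dots> = ?rhs" using fpos by (simp add: X_def field_simps)
    finally show ?thesis .
  qed
  have ck2: "c (k - 1) (Suc m) = (real k - 1) * X * (real k + 2 * real m) / (real m + 1)"
  proof (cases "k = 1")
    case True
    then show ?thesis by (simp add: c_def)
  next
    case False
    have e2: "k - 1 + 2 * Suc m - 1 = Suc (k + 2 * m - 1)" "k - 1 + Suc m = k + m" using assms by auto
    have "(fact (k - 1 + 2 * Suc m - 1) :: real) = (real k + 2 * real m) * F"
    proof -
      define x where "x = k + 2 * m - 1"
      have hx: "real (Suc x) = real k + 2 * real m" using assms by (simp add: x_def)
      have "(fact (Suc x) :: real) = real (Suc x) * fact x" by simp
      then show ?thesis unfolding e2 F_def x_def[symmetric] using hx by simp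
    qed
    then show ?thesis using False assms fpos by (simp add: c_def X_def e2 of_nat_diff field_simps)
  qed
  have nz: "real k + real m + 1 \<noteq> 0" "real m + 1 \<noteq> 0" by linarith+
  have ck1': "2 * (real k + real m + 1) * c k (Suc m) = 2 * real k * X * (real k + 2 * real m) * (real k + 2 * real m + 1) / (real m + 1)"
  proof -
    have gen: "\<And>a b P::real. a \<noteq> 0 \<Longrightarrow> 2 * a * (P / (a * b)) = 2 * P / b" by simp
    show ?thesis unfolding ck1 using gen[OF nz(1)] by simp
  qed
  have "2 * real k * c (k - 1) (Suc m) - 4 * real k * c k m - (2 * (real k + real m + 1) * c k (Suc m) - 8 * (real k + real m) * c k m) = 0"
    unfolding ck1' ck2 ck using nz by (simp add: field_simps)
  then show ?thesis by linarith
qed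


lemma Phi: assumes "k \<ge> 1"
  shows "2 * real k * Q (k - 1) m - real k * (\<Sum>i<m. c k i / 4 ^ i) = 2 * (real k + real m) * c k m / 4 ^ m"
proof (induction m)
  case 0
  then show ?case by (simp add: Q_0 c_0)
next
  case (Suc m)
  have st: "2 * real k * c (k - 1) (Suc m) - 4 * real k * c k m
       = 2 * (real k + real m + 1) * c k (Suc m) - 8 * (real k + real m) * c k m"
    using c_step[OF assms] .
  have q: "Q (k - 1) (Suc m) = Q (k - 1) m + c (k - 1) (Suc m) / 4 ^ Suc m" by (simp add: Q_def)
  have s: "(\<Sum>i<Suc m. c k i / 4 ^ i) = (\<Sum>i<m. c k i / 4 ^ i) + c k m / 4 ^ m" by simp
  have p: "(4::real) ^ Suc m = 4 * 4 ^ m" by simp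
  have "2 * real k * Q (k - 1) (Suc m) - real k * (\<Sum>i<Suc m. c k i / 4 ^ i)
     = (2 * real k * Q (k - 1) m - real k * (\<Sum>i<m. c k i / 4 ^ i))
       + (2 * real k * c (k - 1) (Suc m) - 4 * real k * c k m) / 4 ^ Suc m"
    unfolding q s p by (simp add: field_simps)
  also have "\<dots> = 2 * (real k + real m) * c k m / 4 ^ m
       + (2 * (real k + real m + 1) * c k (Suc m) - 8 * (real k + real m) * c k m) / 4 ^ Suc m"
    using Suc st by simp
  also have "\<dots> = 2 * (real k + real (Suc m)) * c k (Suc m) / 4 ^ Suc m"
    unfolding p by (simp add: field_simps)
  finally show ?case .
qed

lemma G_rec: assumes "n \<ge> 2"
  shows "G k (Suc n) = real (2 * n - 2 - k) * G k n + (if k \<ge> 1 then real k * G (k - 1) n else 0)"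
proof (cases "k \<ge> n")
  case True
  then show ?thesis using assms by (simp add: G_def)
next
  case False
  show ?thesis
  proof (cases "k = n - 1")
    case True
    have k1: "k \<ge> 1" using True assms by simp
    have "G k (Suc n) = fact (n - 1)" using True assms by (simp add: G_def Q_0)
    moreover have "G k n = 0" using True assms by (simp add: G_def)
    moreover have "G (k - 1) n = fact (n - 2)" using True assms k1 by (simp add: G_def Q_0)
    moreover have "(fact (n - 1) :: real) = real (n - 1) * fact (n - 2)"
      using assms by (metis Suc_diff_Suc Suc_1 diff_Suc_1 fact_Suc less_le_trans lessI of_nat_fact)
    ultimately show ?thesis using True k1 by simp
  next
    case False2: False
    define j where "j = n - k - 2"
    have nj: "n = k + j + 2" unfolding j_def using False False2 assms by arith
    have ff: "(fact (Suc (k + j)) :: real) = (real k + real j + 1) * fact (k + j)" by simp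
    show ?thesis
    proof (cases "k = 0")
      case True
      have "G 0 (Suc n) = fact (Suc j) * 2 ^ Suc j" using True nj by (simp add: G_def Q_zero)
      moreover have "G 0 n = fact j * 2 ^ j" using True nj by (simp add: G_def Q_zero)
      ultimately show ?thesis using True nj by (simp add: algebra_simps)
    next
      case False3: False
      then have k1: "k \<ge> 1" by simp
      have PH: "2 * real k * Q (k - 1) (Suc j) - real k * Q k j = 2 * (real k + real j + 1) * c k (Suc j) / 4 ^ Suc j"
        using Phi[OF k1, of "Suc j"] by (simp add: Q_def lessThan_Suc_atMost)
      have qs: "Q k (Suc j) = Q k j + c k (Suc j) / 4 ^ Suc j" by (simp add: Q_def)
      have g1: "G k (Suc n) = fact (Suc (k + j)) * 2 ^ Suc j * Q k (Suc j)" using nj by (simp add: G_def)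
      have g2: "G k n = fact (k + j) * 2 ^ j * Q k j" using nj by (simp add: G_def)
      have g3: "G (k - 1) n = fact (k + j) * 2 ^ Suc j * Q (k - 1) (Suc j)" using nj k1
        by (simp add: G_def Suc_diff_le)
      have r: "real (2 * n - 2 - k) = real k + 2 * real j + 2" using nj by simp
      define T where "T = c k (Suc j) / 4 ^ Suc j"
      define F where "F = (fact (k + j) :: real)"
      define P where "P = (2::real) ^ j"
      define a where "a = Q k j"
      define B where "B = Q (k - 1) (Suc j)"
      have PH': "2 * real k * B = real k * a + 2 * (real k + real j + 1) * T"
        using PH unfolding T_def a_def B_def by simp
      have "G k (Suc n) = (real k + real j + 1) * F * (2 * P) * (a + T)"
        unfolding g1 ff qs F_def P_def a_def T_def by simp
      also have "\<dots> = (real k + 2 * real j + 2) * (F * P * a) + F * P * (real k * a + 2 * (real k + real j + 1) * T)"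
        by (simp add: algebra_simps)
      also have "\<dots> = (real k + 2 * real j + 2) * (F * P * a) + F * P * (2 * real k * B)"
        unfolding PH' ..
      also have "\<dots> = real (2 * n - 2 - k) * G k n + real k * G (k - 1) n"
        unfolding g2 g3 r F_def P_def a_def B_def by (simp add: algebra_simps)
      finally show ?thesis using k1 by simp
    qed
  qed
qed


lemma f_G: "n \<ge> 2 \<Longrightarrow> real (f k n) = G k n"
proof (induction n arbitrary: k rule: dec_induct)
  case base
  then show ?case by (simp add: f_2 G_def Q_0)
next
  case (step n)
  show ?case using f_rec[OF step.hyps(1), of k] G_rec[OF step.hyps(1), of k] step.IH by simp
qed

lemma dfact_even: "dfact (2 * j) = 2 ^ j * fact j"
proof (induction j)
  case (Suc j)
  have "dfact (2 * Suc j) = dfact (Suc (Suc (2 * j)))" by simp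
  also have "\<dots> = (2 * j + 2) * dfact (2 * j)" by simp
  finally show ?case using Suc by (simp add: algebra_simps)
qed simp

lemma poch_neg: "m \<le> N \<Longrightarrow> pochhammer (- real N) m = (-1) ^ m * fact N / fact (N - m)"
proof (induction m)
  case 0
  then show ?case by simp
next
  case (Suc m)
  have h: "(fact (N - m) :: real) = real (N - m) * fact (N - Suc m)"
    using Suc.prems by (metis Suc_diff_Suc fact_Suc less_eq_Suc_le of_nat_fact of_nat_mult)
  have nz: "(fact (N - Suc m) :: real) \<noteq> 0" by simp
  have "pochhammer (- real N) (Suc m) = (-1) ^ m * fact N / fact (N - m) * (- real N + real m)"
    using Suc by (simp add: pochhammer_Suc)
  also have "\<dots> = (-1) ^ Suc m * fact N / fact (N - Suc m)"
    unfolding h using Suc.prems nz by (simp add: of_nat_diff field_simps)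
  finally show ?case .
qed

lemma poch_half: "pochhammer (- real M / 2) m * pochhammer (- real M / 2 + 1 / 2) m = pochhammer (- real M) (2 * m) / 4 ^ m"
proof -
  have "pochhammer (2 * (- real M / 2)) (2 * m) = of_nat (2 ^ (2 * m)) * pochhammer (- real M / 2) m * pochhammer (- real M / 2 + 1 / 2) m"
    by (rule pochhammer_double)
  moreover have "(of_nat (2 ^ (2 * m)) :: real) = 4 ^ m" by (simp add: power_mult)
  ultimately show ?thesis by simp
qed

lemma sum_rev: "(\<Sum>m\<le>(j::nat). h m) = (\<Sum>i\<le>j. h (j - i))"
  by (rule sum.reindex_bij_witness[where i="\<lambda>i. j - i" and j="\<lambda>i. j - i"]) (auto simp: diff_diff_cancel)

lemma hyp_G: assumes "1 \<le> k" "k \<le> n - 2"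
  shows "real (fact (2 * n - k - 5)) * real k / real (dfact (2 * n - 2 * k - 4))
             * hyp3F2 1 (2 - real n) (real k + 2 - real n)
                      ((real k + 5) / 2 - real n) (real k / 2 - real n + 3) 1 (n - k - 2) = G k n"
proof -
  define N where "N = n - 2"
  define j where "j = n - k - 2"
  define M where "M = 2 * n - k - 5"
  have n3: "n \<ge> 3" using assms by arith
  have NN: "N = k + j" and MM: "M = k + 2 * j - 1" and dj: "2 * n - 2 * k - 4 = 2 * j"
    using assms n3 unfolding N_def j_def M_def by arith+
  have a2: "2 - real n = - real N" using n3 unfolding N_def by (simp add: of_nat_diff)
  have a3: "real k + 2 - real n = - real j" using assms n3 unfolding j_def by (simp add: of_nat_diff)
  have b1: "(real k + 5) / 2 - real n = - real M / 2" using assms n3 unfolding M_def by (simp add: of_nat_diff field_simps)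
  have b2: "real k / 2 - real n + 3 = - real M / 2 + 1 / 2" using assms n3 unfolding M_def by (simp add: of_nat_diff field_simps)
  define h where "h m = (fact N * fact j * fact (M - 2 * m) * 4 ^ m / (fact (N - m) * fact (j - m) * fact M) :: real)" for m
  have trm: "pochhammer 1 m * pochhammer (2 - real n) m * pochhammer (real k + 2 - real n) m
              / (pochhammer ((real k + 5) / 2 - real n) m * pochhammer (real k / 2 - real n + 3) m) * 1 ^ m / fact m
            = h m" if "m \<le> j" for m
  proof -
    have m1: "m \<le> N" "2 * m \<le> M" using that NN MM assms by arith+
    have p3: "pochhammer (- real M) (2 * m) = fact M / fact (M - 2 * m)"
      using poch_neg[OF m1(2)] by (simp add: power_mult)
    have nz: "(fact (M - 2 * m) :: real) \<noteq> 0" "(fact M :: real) \<noteq> 0" "(fact m :: real) \<noteq> 0"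
      "(fact (N - m) :: real) \<noteq> 0" "(fact (j - m) :: real) \<noteq> 0" by simp_all
    have sgn: "((-1::real) ^ m) * (-1) ^ m = 1" by (simp add: power_mult_distrib[symmetric])
    show ?thesis
      unfolding a2 a3 b1 b2 poch_half p3 poch_neg[OF m1(1)] poch_neg[OF that] pochhammer_fact[symmetric] h_def
      using nz sgn by (simp add: field_simps)
  qed
  have hyp: "hyp3F2 1 (2 - real n) (real k + 2 - real n) ((real k + 5) / 2 - real n) (real k / 2 - real n + 3) 1 (n - k - 2)
     = (\<Sum>i\<le>j. h (j - i))"
    unfolding hyp3F2_def j_def[symmetric] using trm by (simp add: sum_rev[symmetric])
  have G: "G k n = fact N * 2 ^ j * (\<Sum>i\<le>j. c k i / 4 ^ i)"
    using assms n3 unfolding G_def Q_def N_def j_def by simp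
  have pre: "real (fact (2 * n - k - 5)) * real k / real (dfact (2 * n - 2 * k - 4)) = fact M * real k / (2 ^ j * fact j)"
    unfolding dj dfact_even M_def by simp
  have tm: "fact M * real k / (2 ^ j * fact j) * h (j - i) = fact N * 2 ^ j * (c k i / 4 ^ i)" if "i \<le> j" for i
  proof -
    have e: "N - (j - i) = k + i" "j - (j - i) = i" "M - 2 * (j - i) = k + 2 * i - 1"
      using that NN MM assms by arith+
    have p: "(4::real) ^ (j - i) * 4 ^ i = 2 ^ j * 2 ^ j"
    proof -
      have "(4::real) ^ (j - i) * 4 ^ i = 4 ^ j" using that by (simp add: power_add[symmetric])
      also have "(4::real) ^ j = (2 * 2) ^ j" by simp
      also have "\<dots> = 2 ^ j * 2 ^ j" by (rule power_mult_distrib)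
      finally show ?thesis .
    qed
    have nz: "(fact M :: real) \<noteq> 0" "(fact j :: real) \<noteq> 0" "(fact (k + i) :: real) \<noteq> 0" "(fact i :: real) \<noteq> 0"
      "(4::real) ^ i \<noteq> 0" "(2::real) ^ j \<noteq> 0" by simp_all
    have "fact M * real k / (2 ^ j * fact j) * h (j - i) = real k * fact N * fact (k + 2 * i - 1) * 4 ^ (j - i) / (2 ^ j * fact (k + i) * fact i)"
      unfolding h_def e using nz by (simp add: field_simps)
    also have "\<dots> = real k * fact N * fact (k + 2 * i - 1) * (4 ^ (j - i) * 4 ^ i) / (2 ^ j * fact (k + i) * fact i * 4 ^ i)"
      using nz by (simp add: field_simps)
    also have "\<dots> = fact N * 2 ^ j * (c k i / 4 ^ i)"
      unfolding p using nz assms by (simp add: c_def field_simps)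
    finally show ?thesis .
  qed
  show ?thesis unfolding pre hyp G sum_distrib_left using tm by simp
qed


theorem lemma9:
  fixes n :: nat
  assumes "n \<ge> 2"
  shows "f 0 n = dfact (2 * n - 4) \<and>
    (\<forall>k. 1 \<le> k \<and> k \<le> n - 2 \<longrightarrow>
           real (f k n) =
             real (fact (2 * n - k - 5)) * real k / real (dfact (2 * n - 2 * k - 4))
             * hyp3F2 1 (2 - real n) (real k + 2 - real n)
                      ((real k + 5) / 2 - real n) (real k / 2 - real n + 3) 1 (n - k - 2))"
proof
  have "real (f 0 n) = G 0 n" using f_G[OF assms] .
  also have "\<dots> = fact (n - 2) * 2 ^ (n - 2)" using assms by (simp add: G_def Q_zero)
  also have "\<dots> = real (dfact (2 * n - 4))"
  proof -
    have "2 * n - 4 = 2 * (n - 2)" by simp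
    then show ?thesis by (simp add: dfact_even)
  qed
  finally show "f 0 n = dfact (2 * n - 4)" by (simp only: of_nat_eq_iff)
next
  show "\<forall>k. 1 \<le> k \<and> k \<le> n - 2 \<longrightarrow>
           real (f k n) =
             real (fact (2 * n - k - 5)) * real k / real (dfact (2 * n - 2 * k - 4))
             * hyp3F2 1 (2 - real n) (real k + 2 - real n)
                      ((real k + 5) / 2 - real n) (real k / 2 - real n + 3) 1 (n - k - 2)"
    using f_G[OF assms] hyp_G by simp
qed

end
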